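(* Let $I$ be a set, $P_i$ ($i\in I$) pastures, and $\bigotimes_{i\in I}P_i$ with $i_j:P_j\to\bigotimes_{i\in I}P_i$ as described in the context. If $P$ is a pasture and $f_i:P_i\to P$ is a morphism of pastures for each $i\in I$, then there exists a unique morphism $g:\bigotimes_{i\in I}P_i\to P$ such that $f_j=g\circ i_j$ for each $j\in I$.
   Context: A pasture is a multiplicative monoid $P$ with a zero element $0$ (absorbing) such that $P^\times=P\setminus\{0\}$ is an abelian group, together with an involution $x\mapsto -x$ fixing $0$, and a subset $N_P\subseteq P^3$ (write $a+b+c=0$ for $(a,b,c)\in N_P$) such that: (1) $N_P$ is invariant under permutations; (2) if $a+b+c=0$ then $da+db+dc=0$ for all $d\in P$; (3) $a+b+0=0$ iff $a=-b$. A morphism of pastures is a multiplicative map $f$ with $f(0)=0$, $f(1)=1$, $f(-a)=-f(a)$, preserving nullsets. The coproduct: let $\bigoplus_{i\in I}P_i^\times$ be the set of families $(x_i)_{i\in I}$ with $x_i\in P_i^\times$ and $x_i=1_i$ for all but finitely many $i$. Define $(x_i)\sim(y_i)$ iff there is a finite set of indices of even cardinality on which $x_i=-y_i$, with $x_i=y_i$ at all other indices. Set $\bigotimes_{i\in I}P_i=\{0\}\cup(\bigoplus_{i\in I}P_i^\times/\sim)$, classes written $[(x_i)_{i\in I}]$. Multiplication: $0$ absorbing, $[(x_i)][(y_i)]=[(x_iy_i)]$. Involution: $-0=0$ and $-[(x_i)]=[(y_i)]$ where $y_j=-x_j$ for one chosen index $j$ and $y_i=x_i$ for $i\neq j$.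 Nullset: for nonzero elements, $[(x_i)]+[(y_i)]+[(z_i)]=0$ iff there are representatives $(x_i'),(y_i'),(z_i')$ of these classes and an index $j$ with $x'_j+y'_j+z'_j=0$ in $P_j$ and $x'_i=y'_i=z'_i$ for all $i\neq j$; relations involving $0$ are the permutations of $u+v+0=0$ iff $u=-v$. This is a pasture. The maps: $i_j(0)=0$ and $i_j(x)=[(y_i)_{i\in I}]$ with $y_j=x$ and $y_i=1_i$ for $i\neq j$. *)

theory Defs
  imports Main
begin

record 'a pasture =
  pcar  :: "'a set"
  pmul  :: "'a \<Rightarrow> 'a \<Rightarrow> 'a"
  pzero :: 'a
  pone  :: 'a
  pneg  :: "'a \<Rightarrow> 'a"
  pnull :: "('a \<times> 'a \<times> 'a) set"

definition is_pasture :: "('a, 'b) pasture_scheme \<Rightarrow> bool" where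
  "is_pasture P \<longleftrightarrow>
     pzero P \<in> pcar P \<and> pone P \<in> pcar P \<and> pzero P \<noteq> pone P \<and>
     (\<forall>x\<in>pcar P. \<forall>y\<in>pcar P. pmul P x y \<in> pcar P) \<and>
     (\<forall>x\<in>pcar P. \<forall>y\<in>pcar P. \<forall>z\<in>pcar P. pmul P (pmul P x y) z = pmul P x (pmul P y z)) \<and>
     (\<forall>x\<in>pcar P. \<forall>y\<in>pcar P. pmul P x y = pmul P y x) \<and>
     (\<forall>x\<in>pcar P. pmul P (pone P) x = x) \<and>
     (\<forall>x\<in>pcar P. pmul P (pzero P) x = pzero P) \<and>
     (\<forall>x\<in>pcar P. \<forall>y\<in>pcar P. x \<noteq> pzero P \<longrightarrow> y \<noteq> pzero P \<longrightarrow> pmul P x y \<noteq> pzero P) \<and>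
     (\<forall>x\<in>pcar P. x \<noteq> pzero P \<longrightarrow> (\<exists>y\<in>pcar P. pmul P x y = pone P)) \<and>
     (\<forall>x\<in>pcar P. pneg P x \<in> pcar P \<and> pneg P (pneg P x) = x) \<and>
     pneg P (pzero P) = pzero P \<and>
     pnull P \<subseteq> pcar P \<times> pcar P \<times> pcar P \<and>
     (\<forall>a b c. (a, b, c) \<in> pnull P \<longrightarrow>
        (a, c, b) \<in> pnull P \<and> (b, a, c) \<in> pnull P \<and> (b, c, a) \<in> pnull P \<and>
        (c, a, b) \<in> pnull P \<and> (c, b, a) \<in> pnull P) \<and>
     (\<forall>a b c d. (a, b, c) \<in> pnull P \<longrightarrow> d \<in> pcar P \<longrightarrow>
        (pmul P d a, pmul P d b, pmul P d c) \<in> pnull P) \<and>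
     (\<forall>a\<in>pcar P. \<forall>b\<in>pcar P. (a, b, pzero P) \<in> pnull P \<longleftrightarrow> a = pneg P b)"

definition pasture_morphism ::
  "('a, 'c) pasture_scheme \<Rightarrow> ('b, 'd) pasture_scheme \<Rightarrow> ('a \<Rightarrow> 'b) \<Rightarrow> bool" where
  "pasture_morphism P Q f \<longleftrightarrow>
     (\<forall>x\<in>pcar P. f x \<in> pcar Q) \<and>
     f (pzero P) = pzero Q \<and> f (pone P) = pone Q \<and>
     (\<forall>x\<in>pcar P. \<forall>y\<in>pcar P. f (pmul P x y) = pmul Q (f x) (f y)) \<and>
     (\<forall>x\<in>pcar P. f (pneg P x) = pneg Q (f x)) \<and>
     (\<forall>a b c. (a, b, c) \<in> pnull P \<longrightarrow> (f a, f b, f c) \<in> pnull Q)"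

text \<open>Families are functions on the index type, restricted to I
  (value undefined outside I); elements of the coproduct are sets of families:
  the empty set is 0, and nonzero elements are the equivalence classes.\<close>

definition cp_fams :: "'i set \<Rightarrow> ('i \<Rightarrow> 'a pasture) \<Rightarrow> ('i \<Rightarrow> 'a) set" where
  "cp_fams I P = {x. (\<forall>i\<in>I. x i \<in> pcar (P i) \<and> x i \<noteq> pzero (P i)) \<and>
                     (\<forall>i. i \<notin> I \<longrightarrow> x i = undefined) \<and>
                     finite {i\<in>I. x i \<noteq> pone (P i)}}"

definition cp_rel :: "'i set \<Rightarrow> ('i \<Rightarrow> 'a pasture) \<Rightarrow> ('i \<Rightarrow> 'a) \<Rightarrow> ('i \<Rightarrow> 'a) \<Rightarrow> bool" where
  "cp_rel I P x y \<longleftrightarrow> x \<in> cp_fams I P \<and> y \<in> cp_fams I P \<and>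
     (\<exists>S. S \<subseteq> I \<and> finite S \<and> even (card S) \<and>
          (\<forall>i\<in>S. x i = pneg (P i) (y i)) \<and> (\<forall>i\<in>I - S. x i = y i))"

definition cp_class :: "'i set \<Rightarrow> ('i \<Rightarrow> 'a pasture) \<Rightarrow> ('i \<Rightarrow> 'a) \<Rightarrow> ('i \<Rightarrow> 'a) set" where
  "cp_class I P x = {y. cp_rel I P x y}"

definition cp_car :: "'i set \<Rightarrow> ('i \<Rightarrow> 'a pasture) \<Rightarrow> ('i \<Rightarrow> 'a) set set" where
  "cp_car I P = insert {} (cp_class I P ` cp_fams I P)"

definition cp_mul :: "'i set \<Rightarrow> ('i \<Rightarrow> 'a pasture) \<Rightarrow>
    ('i \<Rightarrow> 'a) set \<Rightarrow> ('i \<Rightarrow> 'a) set \<Rightarrow> ('i \<Rightarrow> 'a) set" where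
  "cp_mul I P X Y = (if X = {} \<or> Y = {} then {} else
     (let x = (SOME x. x \<in> X); y = (SOME y. y \<in> Y) in
      cp_class I P (\<lambda>i. if i \<in> I then pmul (P i) (x i) (y i) else undefined)))"

definition cp_one :: "'i set \<Rightarrow> ('i \<Rightarrow> 'a pasture) \<Rightarrow> ('i \<Rightarrow> 'a) set" where
  "cp_one I P = cp_class I P (\<lambda>i. if i \<in> I then pone (P i) else undefined)"

definition cp_neg :: "'i set \<Rightarrow> ('i \<Rightarrow> 'a pasture) \<Rightarrow> ('i \<Rightarrow> 'a) set \<Rightarrow> ('i \<Rightarrow> 'a) set" where
  "cp_neg I P X = (if X = {} then {} else
     (let x = (SOME x. x \<in> X); j = (SOME j. j \<in> I) in
      cp_class I P (x(j := pneg (P j) (x j)))))"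

definition cp_null :: "'i set \<Rightarrow> ('i \<Rightarrow> 'a pasture) \<Rightarrow>
    (('i \<Rightarrow> 'a) set \<times> ('i \<Rightarrow> 'a) set \<times> ('i \<Rightarrow> 'a) set) set" where
  "cp_null I P = {(X, Y, Z). X \<in> cp_car I P \<and> Y \<in> cp_car I P \<and> Z \<in> cp_car I P \<and>
     ((X \<noteq> {} \<and> Y \<noteq> {} \<and> Z \<noteq> {} \<and>
        (\<exists>x\<in>X. \<exists>y\<in>Y. \<exists>z\<in>Z. \<exists>j\<in>I. (x j, y j, z j) \<in> pnull (P j) \<and>
           (\<forall>i\<in>I - {j}. x i = y i \<and> y i = z i))) \<or>
      (Z = {} \<and> X = cp_neg I P Y) \<or>
      (Y = {} \<and> X = cp_neg I P Z) \<or>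
      (X = {} \<and> Y = cp_neg I P Z))}"

definition coprod :: "'i set \<Rightarrow> ('i \<Rightarrow> 'a pasture) \<Rightarrow> ('i \<Rightarrow> 'a) set pasture" where
  "coprod I P = \<lparr> pcar = cp_car I P, pmul = cp_mul I P, pzero = {}, pone = cp_one I P,
                  pneg = cp_neg I P, pnull = cp_null I P \<rparr>"

definition cp_inj :: "'i set \<Rightarrow> ('i \<Rightarrow> 'a pasture) \<Rightarrow> 'i \<Rightarrow> 'a \<Rightarrow> ('i \<Rightarrow> 'a) set" where
  "cp_inj I P j x = (if x = pzero (P j) then {} else
     cp_class I P (\<lambda>i. if i = j then x else if i \<in> I then pone (P i) else undefined))"

end

theory Submission
  imports Defs "HOL-Algebra.FiniteProduct"
begin

lemma pz_in:
  assumes R: "is_pasture R"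
  shows "pzero R \<in> pcar R"
proof -
  have H: "pzero R \<in> pcar R"
    using R unfolding is_pasture_def by (elim conjE) assumption
  show ?thesis using H  by blast
qed

lemma po_in:
  assumes R: "is_pasture R"
  shows "pone R \<in> pcar R"
proof -
  have H: "pone R \<in> pcar R"
    using R unfolding is_pasture_def by (elim conjE) assumption
  show ?thesis using H  by blast
qed

lemma pzo:
  assumes R: "is_pasture R"
  shows "pzero R \<noteq> pone R"
proof -
  have H: "pzero R \<noteq> pone R"
    using R unfolding is_pasture_def by (elim conjE) assumption
  show ?thesis using H  by blast
qed

lemma pm_cl:
  assumes R: "is_pasture R" and h: "x \<in> pcar R" "y \<in> pcar R"
  shows "pmul R x y \<in> pcar R"
proof -
  have H: "\<forall>x\<in>pcar R. \<forall>y\<in>pcar R. pmul R x y \<in> pcar R"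
    using R unfolding is_pasture_def by (elim conjE) assumption
  show ?thesis using H h by blast
qed

lemma pm_assoc:
  assumes R: "is_pasture R" and h: "x \<in> pcar R" "y \<in> pcar R" "z \<in> pcar R"
  shows "pmul R (pmul R x y) z = pmul R x (pmul R y z)"
proof -
  have H: "\<forall>x\<in>pcar R. \<forall>y\<in>pcar R. \<forall>z\<in>pcar R. pmul R (pmul R x y) z = pmul R x (pmul R y z)"
    using R unfolding is_pasture_def by (elim conjE) assumption
  show ?thesis using H h by blast
qed

lemma pm_comm:
  assumes R: "is_pasture R" and h: "x \<in> pcar R" "y \<in> pcar R"
  shows "pmul R x y = pmul R y x"
proof -
  have H: "\<forall>x\<in>pcar R. \<forall>y\<in>pcar R. pmul R x y = pmul R y x"
    using R unfolding is_pasture_def by (elim conjE) assumption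
  show ?thesis using H h by blast
qed

lemma pm_one:
  assumes R: "is_pasture R" and h: "x \<in> pcar R"
  shows "pmul R (pone R) x = x"
proof -
  have H: "\<forall>x\<in>pcar R. pmul R (pone R) x = x"
    using R unfolding is_pasture_def by (elim conjE) assumption
  show ?thesis using H h by blast
qed

lemma pm_zero:
  assumes R: "is_pasture R" and h: "x \<in> pcar R"
  shows "pmul R (pzero R) x = pzero R"
proof -
  have H: "\<forall>x\<in>pcar R. pmul R (pzero R) x = pzero R"
    using R unfolding is_pasture_def by (elim conjE) assumption
  show ?thesis using H h by blast
qed

lemma pm_nozd:
  assumes R: "is_pasture R" and h: "x \<in> pcar R" "y \<in> pcar R" "x \<noteq> pzero R" "y \<noteq> pzero R"
  shows "pmul R x y \<noteq> pzero R"
proof -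
  have H: "\<forall>x\<in>pcar R. \<forall>y\<in>pcar R. x \<noteq> pzero R \<longrightarrow> y \<noteq> pzero R \<longrightarrow> pmul R x y \<noteq> pzero R"
    using R unfolding is_pasture_def by (elim conjE) assumption
  show ?thesis using H h by blast
qed

lemma pn_in:
  assumes R: "is_pasture R" and h: "x \<in> pcar R"
  shows "pneg R x \<in> pcar R"
proof -
  have H: "\<forall>x\<in>pcar R. pneg R x \<in> pcar R \<and> pneg R (pneg R x) = x"
    using R unfolding is_pasture_def by (elim conjE) assumption
  show ?thesis using H h by blast
qed

lemma pn_nn:
  assumes R: "is_pasture R" and h: "x \<in> pcar R"
  shows "pneg R (pneg R x) = x"
proof -
  have H: "\<forall>x\<in>pcar R. pneg R x \<in> pcar R \<and> pneg R (pneg R x) = x"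
    using R unfolding is_pasture_def by (elim conjE) assumption
  show ?thesis using H h by blast
qed

lemma pn_z:
  assumes R: "is_pasture R"
  shows "pneg R (pzero R) = pzero R"
proof -
  have H: "pneg R (pzero R) = pzero R"
    using R unfolding is_pasture_def by (elim conjE) assumption
  show ?thesis using H  by blast
qed

lemma pnull_perm:
  assumes R: "is_pasture R" and h: "(a, b, c) \<in> pnull R"
  shows "(a, c, b) \<in> pnull R \<and> (b, a, c) \<in> pnull R \<and> (b, c, a) \<in> pnull R \<and>
        (c, a, b) \<in> pnull R \<and> (c, b, a) \<in> pnull R"
proof -
  have H: "\<forall>a b c. (a, b, c) \<in> pnull R \<longrightarrow>
        (a, c, b) \<in> pnull R \<and> (b, a, c) \<in> pnull R \<and> (b, c, a) \<in> pnull R \<and>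
        (c, a, b) \<in> pnull R \<and> (c, b, a) \<in> pnull R"
    using R unfolding is_pasture_def by (elim conjE) assumption
  show ?thesis using H h by blast
qed

lemma pnull_scale:
  assumes R: "is_pasture R" and h: "(a, b, c) \<in> pnull R" and d: "d \<in> pcar R"
  shows "(pmul R d a, pmul R d b, pmul R d c) \<in> pnull R"
proof -
  have H: "\<forall>a b c d. (a, b, c) \<in> pnull R \<longrightarrow> d \<in> pcar R \<longrightarrow>
        (pmul R d a, pmul R d b, pmul R d c) \<in> pnull R"
    using R unfolding is_pasture_def by (elim conjE) assumption
  show ?thesis using H h d by blast
qed

lemma pnull_0:
  assumes R: "is_pasture R" and a: "a \<in> pcar R" and b: "b \<in> pcar R"
  shows "(a, b, pzero R) \<in> pnull R \<longleftrightarrow> a = pneg R b"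
proof -
  have H: "\<forall>a\<in>pcar R. \<forall>b\<in>pcar R. (a, b, pzero R) \<in> pnull R \<longleftrightarrow> a = pneg R b"
    using R unfolding is_pasture_def by (elim conjE) assumption
  show ?thesis using H a b by blast
qed

lemmas pasD = pz_in po_in pzo pm_cl pm_assoc pm_comm pm_one pm_zero pm_nozd pn_in pn_nn pn_z

lemma pas_neg_mul:
  assumes R: "is_pasture R" and x: "x \<in> pcar R"
  shows "pneg R x = pmul R (pneg R (pone R)) x"
proof -
  let ?m = "pneg R (pone R)"
  have m: "?m \<in> pcar R" using pn_in[OF R po_in[OF R]] .
  have "(?m, pone R, pzero R) \<in> pnull R" using pnull_0[OF R m po_in[OF R]] by simp
  from pnull_scale[OF R this x]
  have "(pmul R x ?m, pmul R x (pone R), pmul R x (pzero R)) \<in> pnull R" .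
  moreover have "pmul R x (pone R) = x" using pm_comm[OF R x po_in[OF R]] pm_one[OF R x] by simp
  moreover have "pmul R x (pzero R) = pzero R" using pm_comm[OF R x pz_in[OF R]] pm_zero[OF R x] by simp
  ultimately have "(pmul R x ?m, x, pzero R) \<in> pnull R" by simp
  hence "pmul R x ?m = pneg R x" using pnull_0[OF R pm_cl[OF R x m] x] by simp
  thus ?thesis using pm_comm[OF R x m] by simp
qed

lemma pas_mm:
  assumes R: "is_pasture R"
  shows "pmul R (pneg R (pone R)) (pneg R (pone R)) = pone R"
  using pas_neg_mul[OF R pn_in[OF R po_in[OF R]]] pn_nn[OF R po_in[OF R]] by simp

lemma pas_negl:
  assumes R: "is_pasture R" and a: "a \<in> pcar R" and b: "b \<in> pcar R"
  shows "pmul R (pneg R a) b = pneg R (pmul R a b)"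
proof -
  have m: "pneg R (pone R) \<in> pcar R" using pn_in[OF R po_in[OF R]] .
  show ?thesis
    using pas_neg_mul[OF R a] pas_neg_mul[OF R pm_cl[OF R a b]] pm_assoc[OF R m a b] by simp
qed

lemma pas_negr:
  assumes R: "is_pasture R" and a: "a \<in> pcar R" and b: "b \<in> pcar R"
  shows "pmul R a (pneg R b) = pneg R (pmul R a b)"
  using pas_negl[OF R b a] pm_comm[OF R a b] pm_comm[OF R a pn_in[OF R b]] by simp

lemma pas_negneg:
  assumes R: "is_pasture R" and a: "a \<in> pcar R" and b: "b \<in> pcar R"
  shows "pmul R (pneg R a) (pneg R b) = pmul R a b"
  using pas_negl[OF R a pn_in[OF R b]] pas_negr[OF R a b] pn_nn[OF R pm_cl[OF R a b]] by simp

lemma pas_neg_nz: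
  assumes R: "is_pasture R" and a: "a \<in> pcar R" and "a \<noteq> pzero R"
  shows "pneg R a \<noteq> pzero R"
  using assms pn_nn[OF R a] pn_z[OF R] by metis

definition mon :: "('b, 'c) pasture_scheme \<Rightarrow> 'b monoid" where
  "mon R = \<lparr>carrier = pcar R, mult = pmul R, one = pone R\<rparr>"

lemma mon_simps [simp]: "carrier (mon R) = pcar R" "mult (mon R) = pmul R" "one (mon R) = pone R"
  by (simp_all add: mon_def)

lemma mon_cm: "is_pasture R \<Longrightarrow> comm_monoid (mon R)"
  apply (rule comm_monoidI)
      apply (auto simp: pasD)
   apply (metis pm_assoc pm_cl pm_comm)
  apply (metis pm_comm pm_one po_in)
  done

lemma even_symdiff:
  assumes "finite S" "finite T" "even (card S)" "even (card T)"
  shows "even (card ((S - T) \<union> (T - S)))"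
proof -
  have a: "card (S - T) + card (S \<inter> T) = card S"
    by (metis Diff_Diff_Int Diff_subset assms(1) card_Diff_subset card_mono finite_Diff le_add_diff_inverse2 Int_commute inf_le1 add.commute)
  have b: "card (T - S) + card (S \<inter> T) = card T"
    by (metis Int_commute Diff_Diff_Int Diff_subset assms(2) card_Diff_subset card_mono finite_Diff le_add_diff_inverse2 inf_le1 add.commute)
  have c: "card ((S - T) \<union> (T - S)) = card (S - T) + card (T - S)"
    by (rule card_Un_disjoint) (use assms in auto)
  show ?thesis using a b c assms(3,4) by presburger
qed


locale cpl =
  fixes I :: "'i set" and P :: "'i \<Rightarrow> 'a pasture" and Q :: "'b pasture"
    and f :: "'i \<Rightarrow> 'a \<Rightarrow> 'b"
  assumes ne: "I \<noteq> {}"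
    and PP: "\<forall>i\<in>I. is_pasture (P i)"
    and QQ: "is_pasture Q"
    and ff: "\<forall>i\<in>I. pasture_morphism (P i) Q (f i)"
begin

sublocale M: comm_monoid "mon Q" by (rule mon_cm[OF QQ])

definition supp :: "('i \<Rightarrow> 'a) \<Rightarrow> 'i set" where
  "supp x = {i\<in>I. x i \<noteq> pone (P i)}"

definition val :: "('i \<Rightarrow> 'a) \<Rightarrow> 'b" where
  "val x = finprod (mon Q) (\<lambda>i. f i (x i)) (supp x)"

definition fmul :: "('i \<Rightarrow> 'a) \<Rightarrow> ('i \<Rightarrow> 'a) \<Rightarrow> ('i \<Rightarrow> 'a)" where
  "fmul a b = (\<lambda>i. if i \<in> I then pmul (P i) (a i) (b i) else undefined)"

definition gg :: "('i \<Rightarrow> 'a) set \<Rightarrow> 'b" where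
  "gg X = (if X = {} then pzero Q else val (SOME x. x \<in> X))"

lemma Pi: "i \<in> I \<Longrightarrow> is_pasture (P i)" using PP by blast
lemma fi: "i \<in> I \<Longrightarrow> pasture_morphism (P i) Q (f i)" using ff by blast

lemma f_in: "i \<in> I \<Longrightarrow> a \<in> pcar (P i) \<Longrightarrow> f i a \<in> pcar Q"
  using fi unfolding pasture_morphism_def by blast
lemma f_one: "i \<in> I \<Longrightarrow> f i (pone (P i)) = pone Q"
  using fi unfolding pasture_morphism_def by blast
lemma f_zero: "i \<in> I \<Longrightarrow> f i (pzero (P i)) = pzero Q"
  using fi unfolding pasture_morphism_def by blast
lemma f_mul: "i \<in> I \<Longrightarrow> a \<in> pcar (P i) \<Longrightarrow> b \<in> pcar (P i) \<Longrightarrow> f i (pmul (P i) a b) = pmul Q (f i a) (f i b)"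
  using fi unfolding pasture_morphism_def by blast
lemma f_neg: "i \<in> I \<Longrightarrow> a \<in> pcar (P i) \<Longrightarrow> f i (pneg (P i) a) = pneg Q (f i a)"
  using fi unfolding pasture_morphism_def by blast
lemma f_null: "i \<in> I \<Longrightarrow> (a, b, c) \<in> pnull (P i) \<Longrightarrow> (f i a, f i b, f i c) \<in> pnull Q"
  using fi unfolding pasture_morphism_def by blast

lemma famD:
  assumes "x \<in> cp_fams I P"
  shows "\<And>i. i \<in> I \<Longrightarrow> x i \<in> pcar (P i)" "\<And>i. i \<in> I \<Longrightarrow> x i \<noteq> pzero (P i)"
    "\<And>i. i \<notin> I \<Longrightarrow> x i = undefined" "finite (supp x)"
  using assms unfolding cp_fams_def supp_def by auto

lemma famI:
  assumes "\<And>i. i \<in> I \<Longrightarrow> x i \<in> pcar (P i)" "\<And>i. i \<in> I \<Longrightarrow> x i \<noteq> pzero (P i)"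
    "\<And>i. i \<notin> I \<Longrightarrow> x i = undefined" "finite (supp x)"
  shows "x \<in> cp_fams I P"
  using assms unfolding cp_fams_def supp_def by auto

lemma supp_sub: "supp x \<subseteq> I" unfolding supp_def by auto

lemma fx_Pi: "x \<in> cp_fams I P \<Longrightarrow> T \<subseteq> I \<Longrightarrow> (\<lambda>i. f i (x i)) \<in> T \<rightarrow> pcar Q"
  using famD(1) f_in by blast

lemma val_T:
  assumes x: "x \<in> cp_fams I P" and T: "finite T" "supp x \<subseteq> T" "T \<subseteq> I"
  shows "val x = finprod (mon Q) (\<lambda>i. f i (x i)) T"
  unfolding val_def
proof (rule M.finprod_mono_neutral_cong_left)
  show "\<And>i. i \<in> T - supp x \<Longrightarrow> f i (x i) = one (mon Q)"
    using T f_one unfolding supp_def by auto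
  show "(\<lambda>i. f i (x i)) \<in> T \<rightarrow> carrier (mon Q)" using fx_Pi[OF x T(3)] by simp
qed (use T in auto)

lemma val_in:
  assumes x: "x \<in> cp_fams I P" shows "val x \<in> pcar Q"
proof -
  have "(\<lambda>i. f i (x i)) \<in> supp x \<rightarrow> carrier (mon Q)" using fx_Pi[OF x supp_sub] by simp
  from M.finprod_closed[OF this] show ?thesis by (simp add: val_def)
qed


lemma pas_r_one: "is_pasture R \<Longrightarrow> x \<in> pcar R \<Longrightarrow> pmul R x (pone R) = x"
  using pm_comm pm_one po_in by metis

lemma pas_r_zero: "is_pasture R \<Longrightarrow> x \<in> pcar R \<Longrightarrow> pmul R x (pzero R) = pzero R"
  using pm_comm pm_zero pz_in by metis

lemma val_split:
  assumes x: "x \<in> cp_fams I P" and T: "finite T" "supp x \<subseteq> T" "T \<subseteq> I" and j: "j \<in> T"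
  shows "val x = pmul Q (f j (x j)) (finprod (mon Q) (\<lambda>i. f i (x i)) (T - {j}))"
proof -
  have e: "T = insert j (T - {j})" using j by blast
  have "val x = finprod (mon Q) (\<lambda>i. f i (x i)) (insert j (T - {j}))" using val_T[OF x T] e by simp
  also have "\<dots> = mult (mon Q) (f j (x j)) (finprod (mon Q) (\<lambda>i. f i (x i)) (T - {j}))"
    by (rule M.finprod_insert) (use T j fx_Pi[OF x T(3)] in auto)
  finally show ?thesis by simp
qed

lemma rel_fam: "cp_rel I P x y \<Longrightarrow> x \<in> cp_fams I P \<and> y \<in> cp_fams I P"
  by (simp add: cp_rel_def)

lemma rel_refl: "x \<in> cp_fams I P \<Longrightarrow> cp_rel I P x x"
  unfolding cp_rel_def by (rule conjI, simp, rule conjI, simp, rule exI[of _ "{}"]) auto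

lemma rel_sym: assumes "cp_rel I P x y" shows "cp_rel I P y x"
proof -
  from assms obtain S where x: "x \<in> cp_fams I P" and y: "y \<in> cp_fams I P" and S: "S \<subseteq> I" "finite S" "even (card S)"
    "\<forall>i\<in>S. x i = pneg (P i) (y i)" "\<forall>i\<in>I - S. x i = y i" unfolding cp_rel_def by blast
  have "\<forall>i\<in>S. y i = pneg (P i) (x i)"
  proof
    fix i assume i: "i \<in> S"
    hence iI: "i \<in> I" using S by blast
    show "y i = pneg (P i) (x i)" using S(4) i pn_nn[OF Pi[OF iI] famD(1)[OF y iI]] by simp
  qed
  thus ?thesis unfolding cp_rel_def using x y S by (intro conjI exI[of _ S]) auto
qed

lemma rel_trans: assumes "cp_rel I P x y" "cp_rel I P y z" shows "cp_rel I P x z"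
proof -
  from assms(1) obtain S where x: "x \<in> cp_fams I P" and y: "y \<in> cp_fams I P" and S: "S \<subseteq> I" "finite S" "even (card S)"
    "\<forall>i\<in>S. x i = pneg (P i) (y i)" "\<forall>i\<in>I - S. x i = y i" unfolding cp_rel_def by blast
  from assms(2) obtain T where z: "z \<in> cp_fams I P" and T: "T \<subseteq> I" "finite T" "even (card T)"
    "\<forall>i\<in>T. y i = pneg (P i) (z i)" "\<forall>i\<in>I - T. y i = z i" unfolding cp_rel_def by blast
  let ?U = "(S - T) \<union> (T - S)"
  have U: "?U \<subseteq> I" "finite ?U" "even (card ?U)" using S T even_symdiff by auto
  have "\<forall>i\<in>?U. x i = pneg (P i) (z i)" using S T by auto
  moreover have "\<forall>i\<in>I - ?U. x i = z i"
  proof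
    fix i assume i: "i \<in> I - ?U"
    show "x i = z i"
    proof (cases "i \<in> S")
      case True
      with i have "i \<in> T" by blast
      thus ?thesis using True S(4) T(4) pn_nn[OF Pi famD(1)[OF z]] i by auto
    next
      case False
      with i have "i \<notin> T" by blast
      thus ?thesis using False S(5) T(5) i by auto
    qed
  qed
  ultimately show ?thesis unfolding cp_rel_def using x z U by (intro conjI exI[of _ ?U]) auto
qed

lemma in_class: "y \<in> cp_class I P x \<longleftrightarrow> cp_rel I P x y"
  by (simp add: cp_class_def)

lemma class_eq: assumes "cp_rel I P a b" shows "cp_class I P a = cp_class I P b"
  unfolding cp_class_def using rel_sym rel_trans assms by blast

lemma class_ne: "x \<in> cp_fams I P \<Longrightarrow> cp_class I P x \<noteq> {}"
  using rel_refl in_class by blast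

lemma some_class: "x \<in> cp_fams I P \<Longrightarrow> cp_rel I P x (SOME y. y \<in> cp_class I P x)"
  using class_ne in_class by (metis ex_in_conv someI_ex)

lemma Q_m: "pneg Q (pone Q) \<in> pcar Q" using pn_in[OF QQ po_in[OF QQ]] .

lemma val_rel: assumes "cp_rel I P x y" shows "val x = val y"
proof -
  from assms obtain S where x: "x \<in> cp_fams I P" and y: "y \<in> cp_fams I P" and S: "S \<subseteq> I" "finite S" "even (card S)"
    "\<forall>i\<in>S. x i = pneg (P i) (y i)" "\<forall>i\<in>I - S. x i = y i" unfolding cp_rel_def by blast
  define m where "m = pneg Q (pone Q)"
  have m: "m \<in> pcar Q" using Q_m m_def by simp
  define T where "T = supp x \<union> supp y \<union> S"
  have T: "finite T" "T \<subseteq> I" using famD(4)[OF x] famD(4)[OF y] S supp_sub unfolding T_def by auto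
  have fy: "(\<lambda>i. f i (y i)) \<in> T \<rightarrow> carrier (mon Q)" using fx_Pi[OF y T(2)] by simp
  have sg: "(\<lambda>i. if i \<in> S then m else pone Q) \<in> T \<rightarrow> carrier (mon Q)" using m po_in[OF QQ] by auto
  have "val x = finprod (mon Q) (\<lambda>i. f i (x i)) T" by (rule val_T[OF x T(1) _ T(2)]) (auto simp: T_def)
  also have "\<dots> = finprod (mon Q) (\<lambda>i. mult (mon Q) (if i \<in> S then m else pone Q) (f i (y i))) T"
  proof (rule M.finprod_cong')
    show "(\<lambda>i. mult (mon Q) (if i \<in> S then m else pone Q) (f i (y i))) \<in> T \<rightarrow> carrier (mon Q)"
    proof
      fix i assume i: "i \<in> T"
      have "f i (y i) \<in> pcar Q" using fy i by auto
      thus "mult (mon Q) (if i \<in> S then m else pone Q) (f i (y i)) \<in> carrier (mon Q)"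
        using m po_in[OF QQ] pm_cl[OF QQ] by simp
    qed
    fix i assume i: "i \<in> T"
    hence iI: "i \<in> I" using T by blast
    show "f i (x i) = mult (mon Q) (if i \<in> S then m else pone Q) (f i (y i))"
    proof (cases "i \<in> S")
      case True
      then show ?thesis using S(4) f_neg[OF iI famD(1)[OF y iI]] pas_neg_mul[OF QQ f_in[OF iI famD(1)[OF y iI]]]
        by (simp add: m_def)
    next
      case False
      then show ?thesis using S(5) iI pm_one[OF QQ f_in[OF iI famD(1)[OF y iI]]] by simp
    qed
  qed simp
  also have "\<dots> = mult (mon Q) (finprod (mon Q) (\<lambda>i. if i \<in> S then m else pone Q) T) (finprod (mon Q) (\<lambda>i. f i (y i)) T)"
    by (rule M.finprod_multf[OF sg fy])
  also have "finprod (mon Q) (\<lambda>i. if i \<in> S then m else pone Q) T = finprod (mon Q) (\<lambda>i. m) S"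
    by (rule M.finprod_mono_neutral_cong_right) (use T sg in \<open>auto simp: T_def\<close>)
  also have "\<dots> = m [^]\<^bsub>mon Q\<^esub> card S" using M.finprod_const m by simp
  also have "\<dots> = pone Q"
  proof -
    obtain k where k: "card S = 2 * k" using S(3) by blast
    have m2: "m [^]\<^bsub>mon Q\<^esub> (2::nat) = one (mon Q)"
      using m pas_mm[OF QQ] pm_one[OF QQ m] by (simp add: numeral_2_eq_2 m_def)
    have "m [^]\<^bsub>mon Q\<^esub> card S = (m [^]\<^bsub>mon Q\<^esub> (2::nat)) [^]\<^bsub>mon Q\<^esub> k"
      using k m M.nat_pow_pow by simp
    thus ?thesis using m2 M.nat_pow_one[of k] by simp
  qed
  also have "finprod (mon Q) (\<lambda>i. f i (y i)) T = val y"
    by (rule val_T[OF y T(1) _ T(2), symmetric]) (auto simp: T_def)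
  finally show ?thesis using pm_one[OF QQ val_in[OF y]] by simp
qed


lemma val_class: "x \<in> cp_fams I P \<Longrightarrow> gg (cp_class I P x) = val x"
  unfolding gg_def using class_ne some_class val_rel by metis

lemma car_cases: "X \<in> cp_car I P \<Longrightarrow> X = {} \<or> (\<exists>x\<in>cp_fams I P. X = cp_class I P x)"
  unfolding cp_car_def by auto

lemma class_car: "x \<in> cp_fams I P \<Longrightarrow> cp_class I P x \<in> cp_car I P"
  unfolding cp_car_def by auto

lemma gg_mem: assumes "X \<in> cp_car I P" "y \<in> X" shows "y \<in> cp_fams I P \<and> gg X = val y"
proof -
  from car_cases[OF assms(1)] assms(2) obtain x where x: "x \<in> cp_fams I P" "X = cp_class I P x" by blast
  hence r: "cp_rel I P x y" using assms(2) in_class by blast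
  show ?thesis using rel_fam[OF r] val_rel[OF r] val_class[OF x(1)] x(2) by simp
qed

lemma gg_empty: "gg {} = pzero Q" by (simp add: gg_def)

lemma gg_in: assumes "X \<in> cp_car I P" shows "gg X \<in> pcar Q"
proof (cases "X = {}")
  case True thus ?thesis using pz_in[OF QQ] gg_empty by simp
next
  case False
  then obtain x where "x \<in> cp_fams I P" "X = cp_class I P x" using car_cases[OF assms] by blast
  thus ?thesis using val_class val_in by simp
qed

lemma fmul_fam: assumes a: "a \<in> cp_fams I P" and b: "b \<in> cp_fams I P"
  shows "fmul a b \<in> cp_fams I P" "supp (fmul a b) \<subseteq> supp a \<union> supp b"
proof -
  show sub: "supp (fmul a b) \<subseteq> supp a \<union> supp b"
    unfolding supp_def fmul_def using pm_one[OF Pi po_in[OF Pi]] by auto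
  show "fmul a b \<in> cp_fams I P"
  proof (rule famI)
    show "finite (supp (fmul a b))" using sub famD(4)[OF a] famD(4)[OF b] finite_subset by blast
    show "\<And>i. i \<in> I \<Longrightarrow> fmul a b i \<noteq> pzero (P i)"
    proof -
      fix i assume iI: "i \<in> I"
      show "fmul a b i \<noteq> pzero (P i)"
        using pm_nozd[OF Pi[OF iI] famD(1)[OF a iI] famD(1)[OF b iI] famD(2)[OF a iI] famD(2)[OF b iI]] iI
        by (simp add: fmul_def)
    qed
  qed (auto simp: fmul_def intro!: pm_cl[OF Pi] famD[OF a] famD[OF b])
qed

lemma val_fmul: assumes a: "a \<in> cp_fams I P" and b: "b \<in> cp_fams I P"
  shows "val (fmul a b) = pmul Q (val a) (val b)"
proof -
  define T where "T = supp a \<union> supp b"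
  have T: "finite T" "T \<subseteq> I" using famD(4)[OF a] famD(4)[OF b] supp_sub unfolding T_def by auto
  have fa: "(\<lambda>i. f i (a i)) \<in> T \<rightarrow> carrier (mon Q)" using fx_Pi[OF a T(2)] by simp
  have fb: "(\<lambda>i. f i (b i)) \<in> T \<rightarrow> carrier (mon Q)" using fx_Pi[OF b T(2)] by simp
  have "val (fmul a b) = finprod (mon Q) (\<lambda>i. f i (fmul a b i)) T"
    by (rule val_T[OF fmul_fam(1)[OF a b] T(1) _ T(2)]) (use fmul_fam(2)[OF a b] in \<open>simp add: T_def\<close>)
  also have "\<dots> = finprod (mon Q) (\<lambda>i. mult (mon Q) (f i (a i)) (f i (b i))) T"
  proof (rule M.finprod_cong')
    show "(\<lambda>i. mult (mon Q) (f i (a i)) (f i (b i))) \<in> T \<rightarrow> carrier (mon Q)"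
      using fa fb M.m_closed by blast
    fix i assume "i \<in> T" hence iI: "i \<in> I" using T by blast
    show "f i (fmul a b i) = mult (mon Q) (f i (a i)) (f i (b i))"
      using f_mul[OF iI famD(1)[OF a iI] famD(1)[OF b iI]] iI by (simp add: fmul_def)
  qed simp
  also have "\<dots> = mult (mon Q) (finprod (mon Q) (\<lambda>i. f i (a i)) T) (finprod (mon Q) (\<lambda>i. f i (b i)) T)"
    by (rule M.finprod_multf[OF fa fb])
  also have "\<dots> = pmul Q (val a) (val b)"
    using val_T[OF a T(1) _ T(2)] val_T[OF b T(1) _ T(2)] by (simp add: T_def)
  finally show ?thesis .
qed

lemma rel_fmul: assumes "cp_rel I P a a'" "cp_rel I P b b'" shows "cp_rel I P (fmul a b) (fmul a' b')"
proof -
  from assms(1) obtain S where a: "a \<in> cp_fams I P" and a': "a' \<in> cp_fams I P" and S: "S \<subseteq> I" "finite S" "even (card S)"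
    "\<forall>i\<in>S. a i = pneg (P i) (a' i)" "\<forall>i\<in>I - S. a i = a' i" unfolding cp_rel_def by blast
  from assms(2) obtain T where b: "b \<in> cp_fams I P" and b': "b' \<in> cp_fams I P" and T: "T \<subseteq> I" "finite T" "even (card T)"
    "\<forall>i\<in>T. b i = pneg (P i) (b' i)" "\<forall>i\<in>I - T. b i = b' i" unfolding cp_rel_def by blast
  let ?U = "(S - T) \<union> (T - S)"
  have U: "?U \<subseteq> I" "finite ?U" "even (card ?U)" using S T even_symdiff by auto
  have 1: "\<forall>i\<in>?U. fmul a b i = pneg (P i) (fmul a' b' i)"
  proof
    fix i assume i: "i \<in> ?U"
    hence iI: "i \<in> I" using U by blast
    note R = Pi[OF iI] and x = famD(1)[OF a' iI] famD(1)[OF b' iI]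
    show "fmul a b i = pneg (P i) (fmul a' b' i)"
    proof (cases "i \<in> S")
      case True
      then show ?thesis using i iI S(4) T(5) pas_negl[OF R x] by (auto simp: fmul_def)
    next
      case False
      then show ?thesis using i iI S(5) T(4) pas_negr[OF R x] by (auto simp: fmul_def)
    qed
  qed
  have 2: "\<forall>i\<in>I - ?U. fmul a b i = fmul a' b' i"
  proof
    fix i assume i: "i \<in> I - ?U"
    hence iI: "i \<in> I" by blast
    note R = Pi[OF iI] and x = famD(1)[OF a' iI] famD(1)[OF b' iI]
    show "fmul a b i = fmul a' b' i"
    proof (cases "i \<in> S")
      case True
      then show ?thesis using i iI S(4) T(4) pas_negneg[OF R x] by (auto simp: fmul_def)
    next
      case False
      then show ?thesis using i iI S(5) T(5) by (auto simp: fmul_def)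
    qed
  qed
  show ?thesis unfolding cp_rel_def using fmul_fam(1)[OF a b] fmul_fam(1)[OF a' b'] U 1 2
    by (intro conjI exI[of _ ?U]) auto
qed

lemma mul_class: assumes a: "a \<in> cp_fams I P" and b: "b \<in> cp_fams I P"
  shows "cp_mul I P (cp_class I P a) (cp_class I P b) = cp_class I P (fmul a b)"
proof -
  define a' where "a' = (SOME x. x \<in> cp_class I P a)"
  define b' where "b' = (SOME x. x \<in> cp_class I P b)"
  have ra: "cp_rel I P a a'" using some_class[OF a] a'_def by simp
  have rb: "cp_rel I P b b'" using some_class[OF b] b'_def by simp
  have "cp_mul I P (cp_class I P a) (cp_class I P b) = cp_class I P (fmul a' b')"
    unfolding cp_mul_def using class_ne[OF a] class_ne[OF b]
    by (simp add: Let_def a'_def b'_def fmul_def)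
  also have "\<dots> = cp_class I P (fmul a b)" using class_eq[OF rel_sym[OF rel_fmul[OF ra rb]]] by simp
  finally show ?thesis .
qed

lemma gg_mul: assumes X: "X \<in> cp_car I P" and Y: "Y \<in> cp_car I P"
  shows "gg (cp_mul I P X Y) = pmul Q (gg X) (gg Y)"
proof (cases "X = {} \<or> Y = {}")
  case True
  have "cp_mul I P X Y = {}" using True by (simp add: cp_mul_def)
  then show ?thesis using True gg_in[OF X] gg_in[OF Y] pm_zero[OF QQ] pas_r_zero[OF QQ] gg_empty
    by auto
next
  case False
  then obtain a b where a: "a \<in> cp_fams I P" "X = cp_class I P a" and b: "b \<in> cp_fams I P" "Y = cp_class I P b"
    using car_cases[OF X] car_cases[OF Y] by blast
  show ?thesis using mul_class[OF a(1) b(1)] val_class fmul_fam(1)[OF a(1) b(1)] val_fmul[OF a(1) b(1)] a b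
    by simp
qed


lemma flip: assumes x: "x \<in> cp_fams I P" and j: "j \<in> I"
  shows "x(j := pneg (P j) (x j)) \<in> cp_fams I P" "val (x(j := pneg (P j) (x j))) = pneg Q (val x)"
proof -
  let ?y = "x(j := pneg (P j) (x j))"
  have sub: "supp ?y \<subseteq> supp x \<union> {j}" unfolding supp_def by auto
  show y: "?y \<in> cp_fams I P"
  proof (rule famI)
    show "finite (supp ?y)" using sub famD(4)[OF x] finite_subset by blast
  qed (use j famD[OF x] pn_in[OF Pi] pas_neg_nz[OF Pi] in auto)
  define T where "T = supp x \<union> {j}"
  have T: "finite T" "T \<subseteq> I" "j \<in> T" using famD(4)[OF x] supp_sub j unfolding T_def by auto
  define C where "C = finprod (mon Q) (\<lambda>i. f i (x i)) (T - {j})"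
  have C: "C \<in> pcar Q" using M.finprod_closed[of "\<lambda>i. f i (x i)" "T - {j}"] fx_Pi[OF x, of "T - {j}"] T
    unfolding C_def by auto
  have xj: "x j \<in> pcar (P j)" using famD(1)[OF x j] .
  have "val ?y = pmul Q (f j (?y j)) (finprod (mon Q) (\<lambda>i. f i (?y i)) (T - {j}))"
    by (rule val_split[OF y T(1) _ T(2) T(3)]) (use sub in \<open>auto simp: T_def\<close>)
  also have "finprod (mon Q) (\<lambda>i. f i (?y i)) (T - {j}) = C"
    unfolding C_def by (rule M.finprod_cong') (use fx_Pi[OF x, of "T - {j}"] T in auto)
  also have "f j (?y j) = pneg Q (f j (x j))" using f_neg[OF j xj] by simp
  also have "pmul Q (pneg Q (f j (x j))) C = pneg Q (pmul Q (f j (x j)) C)"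
    by (rule pas_negl[OF QQ f_in[OF j xj] C])
  also have "pmul Q (f j (x j)) C = val x"
    unfolding C_def by (rule val_split[OF x T(1) _ T(2) T(3), symmetric]) (auto simp: T_def)
  finally show "val ?y = pneg Q (val x)" .
qed

lemma gg_neg: assumes X: "X \<in> cp_car I P" shows "gg (cp_neg I P X) = pneg Q (gg X)"
proof (cases "X = {}")
  case True thus ?thesis by (simp add: cp_neg_def gg_empty pn_z[OF QQ])
next
  case False
  then obtain a where a: "a \<in> cp_fams I P" "X = cp_class I P a" using car_cases[OF X] by blast
  define x where "x = (SOME x. x \<in> X)"
  define j where "j = (SOME j. j \<in> I)"
  have j: "j \<in> I" using ne unfolding j_def by (simp add: some_in_eq)
  have r: "cp_rel I P a x" using some_class[OF a(1)] a(2) x_def by simp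
  have x: "x \<in> cp_fams I P" using rel_fam[OF r] by simp
  have "cp_neg I P X = cp_class I P (x(j := pneg (P j) (x j)))"
    using False by (simp add: cp_neg_def Let_def x_def j_def)
  hence "gg (cp_neg I P X) = val (x(j := pneg (P j) (x j)))" using val_class flip(1)[OF x j] by simp
  also have "\<dots> = pneg Q (val x)" using flip(2)[OF x j] .
  also have "val x = gg X" using val_rel[OF r] val_class[OF a(1)] a(2) by simp
  finally show ?thesis .
qed

definition onef :: "'i \<Rightarrow> 'a" where "onef = (\<lambda>i. if i \<in> I then pone (P i) else undefined)"

lemma onef: "onef \<in> cp_fams I P" "supp onef = {}" "val onef = pone Q" "cp_one I P = cp_class I P onef"
proof -
  show s: "supp onef = {}" by (simp add: supp_def onef_def)
  show "onef \<in> cp_fams I P"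
    by (rule famI) (use s po_in[OF Pi] pzo[OF Pi, THEN not_sym] in \<open>auto simp: onef_def\<close>)
  show "val onef = pone Q" by (simp add: val_def s)
  show "cp_one I P = cp_class I P onef" by (simp add: cp_one_def onef_def)
qed

lemma gg_one: "gg (cp_one I P) = pone Q"
  using onef val_class by simp

definition ef :: "'i \<Rightarrow> 'a \<Rightarrow> 'i \<Rightarrow> 'a" where
  "ef j v = (\<lambda>i. if i = j then v else if i \<in> I then pone (P i) else undefined)"

lemma ef: assumes j: "j \<in> I" and v: "v \<in> pcar (P j)" "v \<noteq> pzero (P j)"
  shows "ef j v \<in> cp_fams I P" "val (ef j v) = f j v" "cp_inj I P j v = cp_class I P (ef j v)"
proof -
  have s: "supp (ef j v) \<subseteq> {j}" by (auto simp: supp_def ef_def)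
  show e: "ef j v \<in> cp_fams I P"
  proof (rule famI)
    show "finite (supp (ef j v))" using s by (rule finite_subset) simp
  qed (use j v po_in[OF Pi] pzo[OF Pi, THEN not_sym] in \<open>auto simp: ef_def\<close>)
  have "val (ef j v) = pmul Q (f j (ef j v j)) (finprod (mon Q) (\<lambda>i. f i (ef j v i)) ({j} - {j}))"
    by (rule val_split[OF e]) (use s j in auto)
  thus "val (ef j v) = f j v" using pas_r_one[OF QQ f_in[OF j v(1)]] by (simp add: ef_def)
  show "cp_inj I P j v = cp_class I P (ef j v)" using v by (simp add: cp_inj_def ef_def)
qed

lemma gg_inj: assumes j: "j \<in> I" and v: "v \<in> pcar (P j)" shows "gg (cp_inj I P j v) = f j v"
proof (cases "v = pzero (P j)")
  case True thus ?thesis by (simp add: cp_inj_def gg_empty f_zero[OF j])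
next
  case False thus ?thesis using ef[OF j v False] val_class by simp
qed


lemma gg_null: assumes "(X, Y, Z) \<in> cp_null I P" shows "(gg X, gg Y, gg Z) \<in> pnull Q"
proof -
  from assms have X: "X \<in> cp_car I P" and Y: "Y \<in> cp_car I P" and Z: "Z \<in> cp_car I P"
    and D: "(X \<noteq> {} \<and> Y \<noteq> {} \<and> Z \<noteq> {} \<and>
        (\<exists>x\<in>X. \<exists>y\<in>Y. \<exists>z\<in>Z. \<exists>j\<in>I. (x j, y j, z j) \<in> pnull (P j) \<and>
           (\<forall>i\<in>I - {j}. x i = y i \<and> y i = z i))) \<or>
      (Z = {} \<and> X = cp_neg I P Y) \<or>
      (Y = {} \<and> X = cp_neg I P Z) \<or>
      (X = {} \<and> Y = cp_neg I P Z)" unfolding cp_null_def by auto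
  have gX: "gg X \<in> pcar Q" and gY: "gg Y \<in> pcar Q" and gZ: "gg Z \<in> pcar Q" using gg_in X Y Z by auto
  show ?thesis
  proof (cases "Z = {} \<and> X = cp_neg I P Y")
    case True
    then show ?thesis using pnull_0[OF QQ gX gY] gg_neg[OF Y] gg_empty by simp
  next
    case c2: False
    show ?thesis
    proof (cases "Y = {} \<and> X = cp_neg I P Z")
      case True
      then have "(gg X, gg Z, gg Y) \<in> pnull Q" using pnull_0[OF QQ gX gZ] gg_neg[OF Z] gg_empty by simp
      then show ?thesis using pnull_perm[OF QQ] by blast
    next
      case c3: False
      show ?thesis
      proof (cases "X = {} \<and> Y = cp_neg I P Z")
        case True
        then have "(gg Y, gg Z, gg X) \<in> pnull Q" using pnull_0[OF QQ gY gZ] gg_neg[OF Z] gg_empty by simp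
        then show ?thesis using pnull_perm[OF QQ] by blast
      next
        case False
        with c2 c3 D obtain x y z j where xyz: "x \<in> X" "y \<in> Y" "z \<in> Z" and j: "j \<in> I"
          and N: "(x j, y j, z j) \<in> pnull (P j)" and E: "\<forall>i\<in>I - {j}. x i = y i \<and> y i = z i" by blast
        have x: "x \<in> cp_fams I P" and vx: "gg X = val x" using gg_mem[OF X xyz(1)] by auto
        have y: "y \<in> cp_fams I P" and vy: "gg Y = val y" using gg_mem[OF Y xyz(2)] by auto
        have z: "z \<in> cp_fams I P" and vz: "gg Z = val z" using gg_mem[OF Z xyz(3)] by auto
        define T where "T = supp x \<union> supp y \<union> supp z \<union> {j}"
        have T: "finite T" "T \<subseteq> I" "j \<in> T" using famD(4)[OF x] famD(4)[OF y] famD(4)[OF z] supp_sub j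
          unfolding T_def by auto
        define C where "C = finprod (mon Q) (\<lambda>i. f i (x i)) (T - {j})"
        have C: "C \<in> pcar Q" using M.finprod_closed[of "\<lambda>i. f i (x i)" "T - {j}"] fx_Pi[OF x, of "T - {j}"] T
          unfolding C_def by auto
        have Cy: "finprod (mon Q) (\<lambda>i. f i (y i)) (T - {j}) = C"
          unfolding C_def by (rule M.finprod_cong') (use fx_Pi[OF x, of "T - {j}"] T E in auto)
        have Cz: "finprod (mon Q) (\<lambda>i. f i (z i)) (T - {j}) = C"
          unfolding C_def by (rule M.finprod_cong') (use fx_Pi[OF x, of "T - {j}"] T E in auto)
        have ex: "val x = pmul Q (f j (x j)) C"
          unfolding C_def by (rule val_split[OF x T(1) _ T(2) T(3)]) (auto simp: T_def)
        have ey: "val y = pmul Q (f j (y j)) C"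
          unfolding Cy[symmetric] by (rule val_split[OF y T(1) _ T(2) T(3)]) (auto simp: T_def)
        have ez: "val z = pmul Q (f j (z j)) C"
          unfolding Cz[symmetric] by (rule val_split[OF z T(1) _ T(2) T(3)]) (auto simp: T_def)
        have "(pmul Q C (f j (x j)), pmul Q C (f j (y j)), pmul Q C (f j (z j))) \<in> pnull Q"
          by (rule pnull_scale[OF QQ f_null[OF j N] C])
        moreover have "pmul Q C (f j (x j)) = pmul Q (f j (x j)) C"
          by (rule pm_comm[OF QQ C f_in[OF j famD(1)[OF x j]]])
        moreover have "pmul Q C (f j (y j)) = pmul Q (f j (y j)) C"
          by (rule pm_comm[OF QQ C f_in[OF j famD(1)[OF y j]]])
        moreover have "pmul Q C (f j (z j)) = pmul Q (f j (z j)) C"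
          by (rule pm_comm[OF QQ C f_in[OF j famD(1)[OF z j]]])
        ultimately show ?thesis using vx vy vz ex ey ez by simp
      qed
    qed
  qed
qed

lemma gg_morph: "pasture_morphism (coprod I P) Q gg"
  unfolding pasture_morphism_def coprod_def
  using gg_in gg_empty gg_one gg_mul gg_neg gg_null by auto

lemma uniq:
  assumes h: "pasture_morphism (coprod I P) Q h"
    and agree: "\<forall>j\<in>I. \<forall>x\<in>pcar (P j). f j x = h (cp_inj I P j x)"
  shows "\<forall>X\<in>cp_car I P. h X = gg X"
proof -
  have h0: "h {} = pzero Q" and h1: "h (cp_one I P) = pone Q"
    and hm: "\<And>X Y. X \<in> cp_car I P \<Longrightarrow> Y \<in> cp_car I P \<Longrightarrow> h (cp_mul I P X Y) = pmul Q (h X) (h Y)"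
    using h unfolding pasture_morphism_def coprod_def by auto
  have main: "\<forall>x\<in>cp_fams I P. supp x = F \<longrightarrow> h (cp_class I P x) = val x" if F: "finite F" for F
    using F
  proof (induction F rule: finite_induct)
    case empty
    show ?case
    proof (intro ballI impI)
      fix x assume x: "x \<in> cp_fams I P" and s: "supp x = {}"
      have "x = onef"
      proof
        fix i show "x i = onef i"
          using s famD(3)[OF x] unfolding supp_def onef_def by (cases "i \<in> I") auto
      qed
      thus "h (cp_class I P x) = val x" using onef h1 by simp
    qed
  next
    case (insert j F)
    show ?case
    proof (intro ballI impI)
      fix x assume x: "x \<in> cp_fams I P" and s: "supp x = insert j F"
      have j: "j \<in> I" using s supp_sub by blast
      have xj: "x j \<in> pcar (P j)" "x j \<noteq> pzero (P j)" using famD(1,2)[OF x j] by auto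
      define x1 where "x1 = x(j := pone (P j))"
      have s1: "supp x1 = F" using s insert(2) unfolding x1_def supp_def by auto
      have x1: "x1 \<in> cp_fams I P"
      proof (rule famI)
        show "finite (supp x1)" using s1 insert(1) by simp
      qed (use famD[OF x] j po_in[OF Pi] pzo[OF Pi, THEN not_sym] in \<open>auto simp: x1_def\<close>)
      note e = ef[OF j xj]
      have fx: "fmul x1 (ef j (x j)) = x"
      proof
        fix i show "fmul x1 (ef j (x j)) i = x i"
        proof (cases "i \<in> I")
          case True
          then show ?thesis using pm_one[OF Pi famD(1)[OF x]] pas_r_one[OF Pi famD(1)[OF x]]
            by (auto simp: fmul_def x1_def ef_def)
        next
          case False
          then show ?thesis using famD(3)[OF x] by (simp add: fmul_def)
        qed
      qed
      have "cp_class I P x = cp_mul I P (cp_class I P x1) (cp_class I P (ef j (x j)))"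
        using mul_class[OF x1 e(1)] fx by simp
      hence "h (cp_class I P x) = pmul Q (h (cp_class I P x1)) (h (cp_class I P (ef j (x j))))"
        using hm class_car x1 e(1) by simp
      also have "h (cp_class I P x1) = val x1" using insert(3) x1 s1 by blast
      also have "h (cp_class I P (ef j (x j))) = f j (x j)" using agree j xj e(3) by simp
      also have "pmul Q (val x1) (f j (x j)) = val x"
        using val_fmul[OF x1 e(1)] e(2) fx by simp
      finally show "h (cp_class I P x) = val x" .
    qed
  qed
  show ?thesis
  proof
    fix X assume X: "X \<in> cp_car I P"
    show "h X = gg X"
    proof (cases "X = {}")
      case True thus ?thesis using h0 gg_empty by simp
    next
      case False
      then obtain x where x: "x \<in> cp_fams I P" "X = cp_class I P x" using car_cases[OF X] by blast
      thus ?thesis using main[OF famD(4)[OF x(1)]] val_class by simp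
    qed
  qed
qed

end

theorem lemma7p4:
  fixes I :: "'i set" and P :: "'i \<Rightarrow> 'a pasture" and Q :: "'b pasture"
    and f :: "'i \<Rightarrow> 'a \<Rightarrow> 'b"
  assumes "I \<noteq> {}"
    and "\<forall>i\<in>I. is_pasture (P i)"
    and "is_pasture Q"
    and "\<forall>i\<in>I. pasture_morphism (P i) Q (f i)"
  shows "\<exists>g. pasture_morphism (coprod I P) Q g \<and>
             (\<forall>j\<in>I. \<forall>x\<in>pcar (P j). f j x = g (cp_inj I P j x)) \<and>
             (\<forall>h. pasture_morphism (coprod I P) Q h \<and>
                  (\<forall>j\<in>I. \<forall>x\<in>pcar (P j). f j x = h (cp_inj I P j x))
                \<longrightarrow> (\<forall>X\<in>pcar (coprod I P). h X = g X))"
proof -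
  interpret C: cpl I P Q f using assms by unfold_locales
  show ?thesis
  proof (intro exI conjI allI impI)
    show "pasture_morphism (coprod I P) Q C.gg" by (rule C.gg_morph)
    show "\<forall>j\<in>I. \<forall>x\<in>pcar (P j). f j x = C.gg (cp_inj I P j x)" using C.gg_inj by simp
    fix h assume "pasture_morphism (coprod I P) Q h \<and>
                  (\<forall>j\<in>I. \<forall>x\<in>pcar (P j). f j x = h (cp_inj I P j x))"
    thus "\<forall>X\<in>pcar (coprod I P). h X = C.gg X" using C.uniq by (simp add: coprod_def)
  qed
qed

end
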